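(* Let $n\ge 2$ and $0<r<1$, and let \[\mathcal{S}_r = \left\{\lambda\begin{pmatrix} 1 & x^*\\ y & yx^*\end{pmatrix} : x,y\in\mathbb{C}^{n-1},\ \|x\|<r,\ \|y\|<r,\ \lambda\in\mathbb{C}\right\}\subseteq\mathcal{M}_n(\mathbb{C}).\] Then $\mathcal{S}_r$ is a semigroup and it is $\frac{4r^2}{(1-r^2)^2}$-submultiplicative.
   Context: Here $\|\cdot\|$ is the Euclidean norm, $x^*$ is the conjugate transpose of a column vector, $\sigma(M)$ is the spectrum and $\rho(M)$ the spectral radius of a matrix $M$. A semigroup $\mathcal{S}\subseteq\mathcal{M}_n(\mathbb{C})$ is called $\varepsilon$-submultiplicative if for all $A,B\in\mathcal{S}$ and every $\gamma\in\sigma(AB)$ there exist $\alpha\in\sigma(A)$ and $\beta\in\sigma(B)$ such that $|\gamma-\alpha\beta|\le\varepsilon\,\rho(A)\rho(B)$. *)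

theory Defs
  imports "Jordan_Normal_Form.Spectral_Radius"
begin

definition vnorm :: "complex vec \<Rightarrow> real" where
  "vnorm x = sqrt (\<Sum>i<dim_vec x. (cmod (x $ i))\<^sup>2)"

definition blockM :: "nat \<Rightarrow> complex vec \<Rightarrow> complex vec \<Rightarrow> complex mat" where
  "blockM n x y = mat n n (\<lambda>(i, j).
     if i = 0 \<and> j = 0 then 1
     else if i = 0 then cnj (x $ (j - 1))
     else if j = 0 then y $ (i - 1)
     else y $ (i - 1) * cnj (x $ (j - 1)))"

definition S_r :: "nat \<Rightarrow> real \<Rightarrow> complex mat set" where
  "S_r n r = {c \<cdot>\<^sub>m blockM n x y | c x y.
     x \<in> carrier_vec (n - 1) \<and> y \<in> carrier_vec (n - 1) \<and> vnorm x < r \<and> vnorm y < r}"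

definition is_semigroup :: "nat \<Rightarrow> complex mat set \<Rightarrow> bool" where
  "is_semigroup n S \<longleftrightarrow> S \<subseteq> carrier_mat n n \<and> (\<forall>A\<in>S. \<forall>B\<in>S. A * B \<in> S)"

definition eps_submultiplicative :: "real \<Rightarrow> complex mat set \<Rightarrow> bool" where
  "eps_submultiplicative \<epsilon> S \<longleftrightarrow>
     (\<forall>A\<in>S. \<forall>B\<in>S. \<forall>\<gamma>\<in>spectrum (A * B). \<exists>\<alpha>\<in>spectrum A. \<exists>\<beta>\<in>spectrum B.
        cmod (\<gamma> - \<alpha> * \<beta>) \<le> \<epsilon> * spectral_radius A * spectral_radius B)"

end

theory Submission
  imports Defs
begin

lemma lagrange_id:
  fixes a b c d :: "'i \<Rightarrow> complex"
  assumes "finite I"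
  shows "2 * ((\<Sum>i\<in>I. a i * c i) * (\<Sum>i\<in>I. b i * d i) - (\<Sum>i\<in>I. a i * d i) * (\<Sum>i\<in>I. b i * c i))
    = (\<Sum>i\<in>I. \<Sum>j\<in>I. (a i * b j - a j * b i) * (c i * d j - c j * d i))"
proof -
  define P where "P i j = a i * c i * (b j * d j)" for i j
  define Q where "Q i j = a i * d i * (b j * c j)" for i j
  have e: "(a i * b j - a j * b i) * (c i * d j - c j * d i) = P i j - Q i j - Q j i + P j i" for i j
    unfolding P_def Q_def by (simp add: algebra_simps)
  have sP: "(\<Sum>i\<in>I. \<Sum>j\<in>I. P j i) = (\<Sum>i\<in>I. \<Sum>j\<in>I. P i j)" by (rule sum.swap)
  have sQ: "(\<Sum>i\<in>I. \<Sum>j\<in>I. Q j i) = (\<Sum>i\<in>I. \<Sum>j\<in>I. Q i j)" by (rule sum.swap)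
  have p1: "(\<Sum>i\<in>I. a i * c i) * (\<Sum>i\<in>I. b i * d i) = (\<Sum>i\<in>I. \<Sum>j\<in>I. P i j)"
    unfolding P_def by (simp add: sum_product)
  have p2: "(\<Sum>i\<in>I. a i * d i) * (\<Sum>i\<in>I. b i * c i) = (\<Sum>i\<in>I. \<Sum>j\<in>I. Q i j)"
    unfolding Q_def by (simp add: sum_product)
  show ?thesis unfolding e p1 p2
    by (simp add: sum.distrib sum_subtractf sP sQ)
qed

definition G :: "'i set \<Rightarrow> ('i \<Rightarrow> complex) \<Rightarrow> ('i \<Rightarrow> complex) \<Rightarrow> real" where
  "G I a b = (\<Sum>i\<in>I. (cmod (a i))\<^sup>2) * (\<Sum>i\<in>I. (cmod (b i))\<^sup>2) - (cmod (\<Sum>i\<in>I. cnj (a i) * b i))\<^sup>2"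

lemma G_id:
  fixes a b :: "'i \<Rightarrow> complex"
  assumes "finite I"
  shows "(\<Sum>i\<in>I. \<Sum>j\<in>I. (cmod (a i * b j - a j * b i))\<^sup>2) = 2 * G I a b"
proof -
  have "complex_of_real (\<Sum>i\<in>I. \<Sum>j\<in>I. (cmod (a i * b j - a j * b i))\<^sup>2)
     = (\<Sum>i\<in>I. \<Sum>j\<in>I. (a i * b j - a j * b i) * (cnj (a i) * cnj (b j) - cnj (a j) * cnj (b i)))"
    unfolding of_real_sum by (intro sum.cong refl, simp only: complex_norm_square, simp)
  also have "\<dots> = 2 * ((\<Sum>i\<in>I. a i * cnj (a i)) * (\<Sum>i\<in>I. b i * cnj (b i)) - (\<Sum>i\<in>I. a i * cnj (b i)) * (\<Sum>i\<in>I. b i * cnj (a i)))"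
    by (rule lagrange_id[OF assms, symmetric])
  also have "\<dots> = complex_of_real (2 * G I a b)"
  proof -
    define S where "S = (\<Sum>i\<in>I. cnj (a i) * b i)"
    have h: "(\<Sum>i\<in>I. b i * cnj (a i)) = S"
      unfolding S_def by (simp add: mult.commute)
    have h2: "(\<Sum>i\<in>I. a i * cnj (b i)) = cnj S"
      unfolding S_def by (simp add: mult.commute)
    have ha: "(\<Sum>i\<in>I. a i * cnj (a i)) = of_real (\<Sum>i\<in>I. (cmod (a i))\<^sup>2)"
      unfolding of_real_sum by (intro sum.cong refl) (simp only: complex_norm_square)
    have hb: "(\<Sum>i\<in>I. b i * cnj (b i)) = of_real (\<Sum>i\<in>I. (cmod (b i))\<^sup>2)"
      unfolding of_real_sum by (intro sum.cong refl) (simp only: complex_norm_square)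
    have hs: "cnj S * S = of_real ((cmod S)\<^sup>2)"
      by (simp only: complex_norm_square mult.commute)
    show ?thesis unfolding h h2 ha hb hs G_def S_def[symmetric] by simp
  qed
  finally show ?thesis using of_real_eq_iff by blast
qed

lemma G_nonneg: "finite I \<Longrightarrow> 0 \<le> G I a b"
  using G_id[of I a b] sum_nonneg[of I "\<lambda>i. \<Sum>j\<in>I. (cmod (a i * b j - a j * b i))\<^sup>2"]
  by (simp add: sum_nonneg)

lemma CS_complex:
  assumes "finite I"
  shows "(cmod (\<Sum>i\<in>I. cnj (a i) * b i))\<^sup>2 \<le> (\<Sum>i\<in>I. (cmod (a i))\<^sup>2) * (\<Sum>i\<in>I. (cmod (b i))\<^sup>2)"
  using G_nonneg[OF assms, of a b] unfolding G_def by simp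

lemma CS_real:
  fixes f g :: "'i \<Rightarrow> real"
  assumes "finite I"
  shows "(\<Sum>i\<in>I. f i * g i)\<^sup>2 \<le> (\<Sum>i\<in>I. (f i)\<^sup>2) * (\<Sum>i\<in>I. (g i)\<^sup>2)"
proof -
  have "(cmod (\<Sum>i\<in>I. cnj (complex_of_real (f i)) * complex_of_real (g i)))\<^sup>2
     \<le> (\<Sum>i\<in>I. (cmod (complex_of_real (f i)))\<^sup>2) * (\<Sum>i\<in>I. (cmod (complex_of_real (g i)))\<^sup>2)"
    by (rule CS_complex[OF assms])
  moreover have "(\<Sum>i\<in>I. cnj (complex_of_real (f i)) * complex_of_real (g i)) = complex_of_real (\<Sum>i\<in>I. f i * g i)"
    by simp
  ultimately show ?thesis by (simp del: of_real_sum)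
qed

lemma lagrange_bound:
  fixes a b c d :: "'i \<Rightarrow> complex"
  assumes I: "finite I"
  shows "(cmod ((\<Sum>i\<in>I. a i * c i) * (\<Sum>i\<in>I. b i * d i) - (\<Sum>i\<in>I. a i * d i) * (\<Sum>i\<in>I. b i * c i)))\<^sup>2
     \<le> G I a b * G I c d"
proof -
  define X where "X = (\<Sum>i\<in>I. a i * c i) * (\<Sum>i\<in>I. b i * d i) - (\<Sum>i\<in>I. a i * d i) * (\<Sum>i\<in>I. b i * c i)"
  define P where "P = (\<lambda>(i,j). a i * b j - a j * b i)"
  define Q where "Q = (\<lambda>(i,j). c i * d j - c j * d i)"
  have "2 * X = (\<Sum>p\<in>I \<times> I. P p * Q p)"
    unfolding X_def lagrange_id[OF I] P_def Q_def sum.cartesian_product by (simp add: split_def)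
  hence "cmod (2 * X) \<le> (\<Sum>p\<in>I \<times> I. cmod (P p) * cmod (Q p))"
    using norm_sum[of "\<lambda>p. P p * Q p" "I \<times> I"] by (simp add: norm_mult)
  hence "2 * cmod X \<le> (\<Sum>p\<in>I \<times> I. cmod (P p) * cmod (Q p))" by simp
  hence "(2 * cmod X)\<^sup>2 \<le> (\<Sum>p\<in>I \<times> I. cmod (P p) * cmod (Q p))\<^sup>2"
    by (intro power_mono) auto
  also have "\<dots> \<le> (\<Sum>p\<in>I \<times> I. (cmod (P p))\<^sup>2) * (\<Sum>p\<in>I \<times> I. (cmod (Q p))\<^sup>2)"
    by (rule CS_real) (use I in auto)
  also have "(\<Sum>p\<in>I \<times> I. (cmod (P p))\<^sup>2) = 2 * G I a b"
    unfolding G_id[OF I, symmetric] P_def by (simp add: sum.cartesian_product')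
  also have "(\<Sum>p\<in>I \<times> I. (cmod (Q p))\<^sup>2) = 2 * G I c d"
    unfolding G_id[OF I, symmetric] Q_def by (simp add: sum.cartesian_product')
  finally have "4 * (cmod X)\<^sup>2 \<le> 4 * (G I a b * G I c d)" by (simp add: power_mult_distrib)
  thus ?thesis unfolding X_def by simp
qed

lemma gram_bound:
  fixes a b :: "nat \<Rightarrow> complex" and r :: real
  assumes a0: "a 0 = 1" and b0: "b 0 = 1"
    and A: "(\<Sum>k<m. (cmod (a (Suc k)))\<^sup>2) \<le> r\<^sup>2"
    and B: "(\<Sum>k<m. (cmod (b (Suc k)))\<^sup>2) \<le> r\<^sup>2"
    and r0: "0 \<le> r" and r1: "r < 1"
  shows "G {..<Suc m} a b \<le> 4 * r\<^sup>2"
proof -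
  define SA where "SA = (\<Sum>k<m. (cmod (a (Suc k)))\<^sup>2)"
  define SB where "SB = (\<Sum>k<m. (cmod (b (Suc k)))\<^sup>2)"
  define z where "z = (\<Sum>k<m. cnj (a (Suc k)) * b (Suc k))"
  have SA0: "0 \<le> SA" unfolding SA_def by (simp add: sum_nonneg)
  have SB0: "0 \<le> SB" unfolding SB_def by (simp add: sum_nonneg)
  define \<alpha> where "\<alpha> = sqrt SA"
  define \<beta> where "\<beta> = sqrt SB"
  have al: "\<alpha>\<^sup>2 = SA" "0 \<le> \<alpha>" unfolding \<alpha>_def using SA0 by auto
  have be: "\<beta>\<^sup>2 = SB" "0 \<le> \<beta>" unfolding \<beta>_def using SB0 by auto
  have SAr: "SA \<le> r\<^sup>2" unfolding SA_def by (rule A)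
  have SBr: "SB \<le> r\<^sup>2" unfolding SB_def by (rule B)
  have rr: "sqrt (r\<^sup>2) = r" using r0 by (rule real_sqrt_unique[OF refl])
  have alr: "\<alpha> \<le> r" unfolding \<alpha>_def using real_sqrt_le_mono[OF SAr] rr by (rule ord_le_eq_trans)
  have ber: "\<beta> \<le> r" unfolding \<beta>_def using real_sqrt_le_mono[OF SBr] rr by (rule ord_le_eq_trans)
  have "(cmod z)\<^sup>2 \<le> SA * SB" unfolding z_def SA_def SB_def by (rule CS_complex) simp
  hence "(cmod z)\<^sup>2 \<le> (\<alpha> * \<beta>)\<^sup>2" unfolding power_mult_distrib al(1) be(1) .
  hence zab: "cmod z \<le> \<alpha> * \<beta>" by (rule power2_le_imp_le[OF _ mult_nonneg_nonneg[OF al(2) be(2)]])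
  have rez: "- (\<alpha> * \<beta>) \<le> Re z" using abs_le_D2[OF abs_Re_le_cmod[of z]] zab by linarith
  have a1: "\<alpha> \<le> 1" using alr r1 by linarith
  have b1: "\<beta> \<le> 1" using ber r1 by linarith
  have ab1: "\<alpha> * \<beta> \<le> 1" by (rule mult_le_one[OF a1 be(2) b1])
  have re1: "Re (1 + z) = 1 + Re z" by simp
  have "(1 - \<alpha> * \<beta>)\<^sup>2 \<le> (Re (1 + z))\<^sup>2"
    by (rule power_mono) (use rez ab1 re1 in linarith)+
  also have "\<dots> \<le> (cmod (1 + z))\<^sup>2"
    using abs_Re_le_cmod[of "1+z"] by (metis abs_le_square_iff abs_norm_cancel)
  finally have c1: "(1 - \<alpha> * \<beta>)\<^sup>2 \<le> (cmod (1 + z))\<^sup>2" .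
  have G: "G {..<Suc m} a b = (1 + SA) * (1 + SB) - (cmod (1 + z))\<^sup>2"
    unfolding G_def SA_def SB_def z_def sum.lessThan_Suc_shift using a0 b0 by simp
  have "G {..<Suc m} a b \<le> (1 + \<alpha>\<^sup>2) * (1 + \<beta>\<^sup>2) - (1 - \<alpha> * \<beta>)\<^sup>2"
    unfolding G al(1) be(1) using c1 by linarith
  also have "\<dots> = (\<alpha> + \<beta>)\<^sup>2" by (simp add: power2_eq_square algebra_simps)
  also have "\<dots> \<le> (2 * r)\<^sup>2"
    by (rule power_mono) (use alr ber al(2) be(2) in linarith)+
  also have "\<dots> = 4 * r\<^sup>2" by (simp only: power_mult_distrib) simp
  finally show ?thesis .
qed

definition R1 :: "nat \<Rightarrow> complex \<Rightarrow> (nat \<Rightarrow> complex) \<Rightarrow> (nat \<Rightarrow> complex) \<Rightarrow> complex mat" where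
  "R1 n c U W = mat n n (\<lambda>(i,j). c * U i * W j)"

lemma R1_carrier: "R1 n c U W \<in> carrier_mat n n" unfolding R1_def by simp

lemma dim_R1[simp]: "dim_row (R1 n c U W) = n" "dim_col (R1 n c U W) = n" unfolding R1_def by auto

lemma R1_mult: "R1 n c U W * R1 n c' U' W' = R1 n (c * c' * (\<Sum>k<n. W k * U' k)) U W'"
  by (rule eq_matI) (auto simp: R1_def scalar_prod_def sum_distrib_left sum_distrib_right
      lessThan_atLeast0 mult_ac intro!: sum.cong)

lemma R1_mult_vec: "v \<in> carrier_vec n \<Longrightarrow> i < n \<Longrightarrow>
   (R1 n c U W *\<^sub>v v) $ i = c * U i * (\<Sum>j<n. W j * v $ j)"
  by (auto simp: R1_def scalar_prod_def sum_distrib_left lessThan_atLeast0 mult_ac intro!: sum.cong)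

lemma R1_spec_sub:
  assumes "k \<in> spectrum (R1 n c U W)"
  shows "k = 0 \<or> k = c * (\<Sum>j<n. W j * U j)"
proof (rule ccontr)
  assume nk: "\<not> (k = 0 \<or> k = c * (\<Sum>j<n. W j * U j))"
  from assms obtain v where v: "v \<in> carrier_vec n" "v \<noteq> 0\<^sub>v n" "R1 n c U W *\<^sub>v v = k \<cdot>\<^sub>v v"
    unfolding spectrum_def eigenvalue_def eigenvector_def using R1_carrier[of n c U W] by auto
  define s where "s = (\<Sum>j<n. W j * v $ j)"
  have vi: "v $ i = c * U i * s / k" if "i < n" for i
  proof -
    have "(R1 n c U W *\<^sub>v v) $ i = (k \<cdot>\<^sub>v v) $ i" using v(3) by simp
    hence "c * U i * s = k * v $ i" using R1_mult_vec[OF v(1) that] v(1) that unfolding s_def by simp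
    thus ?thesis using nk by (simp add: field_simps)
  qed
  have "s = (\<Sum>j<n. W j * v $ j)" unfolding s_def ..
  also have "\<dots> = (\<Sum>j<n. W j * (c * U j * s / k))" by (intro sum.cong refl) (simp add: vi)
  also have "\<dots> = (\<Sum>j<n. (W j * U j) * (c * s / k))" by (intro sum.cong) auto
  also have "\<dots> = s * (c * (\<Sum>j<n. W j * U j)) / k"
    by (simp only: sum_distrib_right[symmetric]) (simp add: mult_ac)
  finally have "s * k = s * (c * (\<Sum>j<n. W j * U j))" using nk by (simp add: field_simps)
  hence "s = 0" using nk by simp
  hence "v = 0\<^sub>v n" using v(1) vi by (intro eq_vecI) auto
  thus False using v(2) by simp
qed

lemma R1_spec_t:
  assumes "U 0 = 1" "0 < n"
  shows "c * (\<Sum>j<n. W j * U j) \<in> spectrum (R1 n c U W)"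
proof -
  define v where "v = vec n U"
  have "v \<noteq> 0\<^sub>v n"
  proof
    assume "v = 0\<^sub>v n"
    hence "v $ 0 = 0" using assms by simp
    thus False using assms unfolding v_def by simp
  qed
  moreover have "R1 n c U W *\<^sub>v v = (c * (\<Sum>j<n. W j * U j)) \<cdot>\<^sub>v v"
  proof (rule eq_vecI)
    have vc: "v \<in> carrier_vec n" unfolding v_def by simp
    fix i assume "i < dim_vec ((c * (\<Sum>j<n. W j * U j)) \<cdot>\<^sub>v v)"
    hence i: "i < n" unfolding v_def by simp
    show "(R1 n c U W *\<^sub>v v) $ i = ((c * (\<Sum>j<n. W j * U j)) \<cdot>\<^sub>v v) $ i"
      unfolding R1_mult_vec[OF vc i] using i by (simp add: v_def mult_ac)
  qed (simp add: v_def)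
  moreover have "v \<in> carrier_vec n" unfolding v_def by simp
  ultimately show ?thesis unfolding spectrum_def eigenvalue_def eigenvector_def
    by (intro CollectI exI[of _ v]) simp
qed

lemma sum_two: "(\<Sum>j<Suc (Suc m). f j) = f 0 + f 1 + (\<Sum>j<m. f (Suc (Suc j)))"
  by (simp only: sum.lessThan_Suc_shift add.assoc) simp

lemma R1_spec_0:
  assumes "W 0 = 1" "2 \<le> n"
  shows "0 \<in> spectrum (R1 n c U W)"
proof -
  obtain m where m: "n = Suc (Suc m)" using assms(2) by (metis add_2_eq_Suc le_Suc_ex)
  define v where "v = vec n (\<lambda>i. if i = 0 then - W 1 else if i = 1 then 1 else 0)"
  have "v \<noteq> 0\<^sub>v n"
  proof
    assume "v = 0\<^sub>v n"
    hence "v $ 1 = 0" using m by simp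
    thus False using m unfolding v_def by simp
  qed
  moreover have sz: "(\<Sum>j<n. W j * v $ j) = 0" unfolding m sum_two v_def using assms(1) m by simp
  have vc: "v \<in> carrier_vec n" unfolding v_def by simp
  have "R1 n c U W *\<^sub>v v = 0 \<cdot>\<^sub>v v"
  proof (rule eq_vecI)
    fix i assume "i < dim_vec (0 \<cdot>\<^sub>v v)"
    hence i: "i < n" unfolding v_def by simp
    show "(R1 n c U W *\<^sub>v v) $ i = (0 \<cdot>\<^sub>v v) $ i"
      unfolding R1_mult_vec[OF vc i] sz using i by (simp add: v_def)
  qed (simp add: v_def)
  moreover have "v \<in> carrier_vec n" unfolding v_def by simp
  ultimately show ?thesis unfolding spectrum_def eigenvalue_def eigenvector_def
    by (intro CollectI exI[of _ v]) simp
qed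

definition Uf :: "complex vec \<Rightarrow> nat \<Rightarrow> complex" where
  "Uf y i = (if i = 0 then 1 else y $ (i - 1))"
definition Wf :: "complex vec \<Rightarrow> nat \<Rightarrow> complex" where
  "Wf x j = (if j = 0 then 1 else cnj (x $ (j - 1)))"
definition T :: "nat \<Rightarrow> complex vec \<Rightarrow> complex vec \<Rightarrow> complex" where
  "T n x y = (\<Sum>j<n. Wf x j * Uf y j)"

lemma Wf0[simp]: "Wf x 0 = 1" unfolding Wf_def by simp
lemma Uf0[simp]: "Uf x 0 = 1" unfolding Uf_def by simp

lemma blockM_R1: "c \<cdot>\<^sub>m blockM n x y = R1 n c (Uf y) (Wf x)"
  by (rule eq_matI) (auto simp: blockM_def R1_def Uf_def Wf_def)

lemma vnorm_sq: assumes "x \<in> carrier_vec m" shows "(vnorm x)\<^sup>2 = (\<Sum>k<m. (cmod (x $ k))\<^sup>2)"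
proof -
  have d: "dim_vec x = m" using assms by (rule carrier_vecD)
  show ?thesis unfolding vnorm_def d by (rule real_sqrt_pow2) (rule sum_nonneg, rule zero_le_power2)
qed

lemma vnorm_nonneg: "0 \<le> vnorm x" unfolding vnorm_def
  by (rule real_sqrt_ge_zero) (rule sum_nonneg, rule zero_le_power2)

lemma sumW: assumes "x \<in> carrier_vec m" shows "(\<Sum>k<m. (cmod (Wf x (Suc k)))\<^sup>2) = (vnorm x)\<^sup>2"
  unfolding vnorm_sq[OF assms] by (intro sum.cong refl) (simp add: Wf_def)
lemma sumU: assumes "x \<in> carrier_vec m" shows "(\<Sum>k<m. (cmod (Uf x (Suc k)))\<^sup>2) = (vnorm x)\<^sup>2"
  unfolding vnorm_sq[OF assms] by (intro sum.cong refl) (simp add: Uf_def)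

lemma T_eq: "T (Suc m) x y = 1 + (\<Sum>k<m. cnj (x $ k) * y $ k)"
  unfolding T_def sum.lessThan_Suc_shift by (simp add: Uf_def Wf_def)

lemma z_bound:
  assumes "x \<in> carrier_vec m" "y \<in> carrier_vec m"
  shows "cmod (\<Sum>k<m. cnj (x $ k) * y $ k) \<le> vnorm x * vnorm y"
proof -
  have "(cmod (\<Sum>k<m. cnj (x $ k) * y $ k))\<^sup>2 \<le> (\<Sum>k<m. (cmod (x $ k))\<^sup>2) * (\<Sum>k<m. (cmod (y $ k))\<^sup>2)"
    by (rule CS_complex) (rule finite_lessThan)
  also have "\<dots> = (vnorm x * vnorm y)\<^sup>2"
    unfolding power_mult_distrib vnorm_sq[OF assms(1)] vnorm_sq[OF assms(2)] ..
  finally show ?thesis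
    by (rule power2_le_imp_le[OF _ mult_nonneg_nonneg[OF vnorm_nonneg vnorm_nonneg]])
qed

lemma T_lower:
  assumes "x \<in> carrier_vec m" "y \<in> carrier_vec m" "vnorm x < r" "vnorm y < r"
  shows "1 - r\<^sup>2 \<le> cmod (T (Suc m) x y)"
proof -
  define z where "z = (\<Sum>k<m. cnj (x $ k) * y $ k)"
  have "cmod z \<le> vnorm x * vnorm y" unfolding z_def by (rule z_bound[OF assms(1,2)])
  also have "\<dots> \<le> r * r"
    by (rule mult_mono) (use assms(3,4) vnorm_nonneg[of x] vnorm_nonneg[of y] in linarith)+
  finally have "cmod z \<le> r\<^sup>2" unfolding power2_eq_square .
  moreover have "1 - cmod z \<le> cmod (1 + z)"
    using norm_triangle_ineq2[of 1 "-z"] by simp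
  ultimately show ?thesis unfolding T_eq z_def[symmetric] by linarith
qed

lemma key_ineq:
  assumes xs: "x \<in> carrier_vec m" "y \<in> carrier_vec m" "x' \<in> carrier_vec m" "y' \<in> carrier_vec m"
    and vs: "vnorm x < r" "vnorm y < r" "vnorm x' < r" "vnorm y' < r"
    and r: "0 < r" "r < 1"
  shows "cmod (T (Suc m) x y' * T (Suc m) x' y - T (Suc m) x y * T (Suc m) x' y')
     \<le> 4 * r\<^sup>2 / (1 - r\<^sup>2)\<^sup>2 * (cmod (T (Suc m) x y) * cmod (T (Suc m) x' y'))"
proof -
  let ?D = "T (Suc m) x y' * T (Suc m) x' y - T (Suc m) x y * T (Suc m) x' y'"
  have r0: "0 \<le> r" using r by linarith
  have wx: "(\<Sum>k<m. (cmod (Wf x (Suc k)))\<^sup>2) \<le> r\<^sup>2" unfolding sumW[OF xs(1)]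
    by (rule power_mono) (use vs vnorm_nonneg[of x] in linarith)+
  have wx': "(\<Sum>k<m. (cmod (Wf x' (Suc k)))\<^sup>2) \<le> r\<^sup>2" unfolding sumW[OF xs(3)]
    by (rule power_mono) (use vs vnorm_nonneg[of x'] in linarith)+
  have uy: "(\<Sum>k<m. (cmod (Uf y (Suc k)))\<^sup>2) \<le> r\<^sup>2" unfolding sumU[OF xs(2)]
    by (rule power_mono) (use vs vnorm_nonneg[of y] in linarith)+
  have uy': "(\<Sum>k<m. (cmod (Uf y' (Suc k)))\<^sup>2) \<le> r\<^sup>2" unfolding sumU[OF xs(4)]
    by (rule power_mono) (use vs vnorm_nonneg[of y'] in linarith)+
  have g1: "G {..<Suc m} (Wf x) (Wf x') \<le> 4 * r\<^sup>2"
    by (rule gram_bound[OF Wf0 Wf0 wx wx' r0 r(2)])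
  have g2: "G {..<Suc m} (Uf y') (Uf y) \<le> 4 * r\<^sup>2"
    by (rule gram_bound[OF Uf0 Uf0 uy' uy r0 r(2)])
  have r4: "0 \<le> 4 * r\<^sup>2" by simp
  have "(cmod ?D)\<^sup>2 \<le> G {..<Suc m} (Wf x) (Wf x') * G {..<Suc m} (Uf y') (Uf y)"
    unfolding T_def by (rule lagrange_bound) (rule finite_lessThan)
  also have "\<dots> \<le> (4 * r\<^sup>2) * (4 * r\<^sup>2)"
    by (rule mult_mono[OF g1 g2 r4 G_nonneg[OF finite_lessThan]])
  finally have D0: "(cmod ?D)\<^sup>2 \<le> (4 * r\<^sup>2) * (4 * r\<^sup>2)" .
  have D1: "(cmod ?D)\<^sup>2 \<le> (4 * r\<^sup>2)\<^sup>2"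
    using D0 unfolding power2_eq_square[of "4 * r\<^sup>2"] .
  have D: "cmod ?D \<le> 4 * r\<^sup>2" by (rule power2_le_imp_le[OF D1 r4])
  have l1: "1 - r\<^sup>2 \<le> cmod (T (Suc m) x y)" by (rule T_lower[OF xs(1,2) vs(1,2)])
  have l2: "1 - r\<^sup>2 \<le> cmod (T (Suc m) x' y')" by (rule T_lower[OF xs(3,4) vs(3,4)])
  have "r * r < 1 * 1" by (rule mult_strict_mono) (use r in linarith)+
  hence rp: "0 < 1 - r\<^sup>2" unfolding power2_eq_square by linarith
  have pr: "(1 - r\<^sup>2)\<^sup>2 \<le> cmod (T (Suc m) x y) * cmod (T (Suc m) x' y')"
    unfolding power2_eq_square[of "1 - r\<^sup>2"]
    by (rule mult_mono[OF l1 l2]) (use rp l1 in linarith)+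
  have e0: "0 \<le> 4 * r\<^sup>2 / (1 - r\<^sup>2)\<^sup>2" by simp
  have eq: "4 * r\<^sup>2 / (1 - r\<^sup>2)\<^sup>2 * (1 - r\<^sup>2)\<^sup>2 = 4 * r\<^sup>2" using rp by simp
  have "4 * r\<^sup>2 \<le> 4 * r\<^sup>2 / (1 - r\<^sup>2)\<^sup>2 * (cmod (T (Suc m) x y) * cmod (T (Suc m) x' y'))"
    using mult_left_mono[OF pr e0] unfolding eq .
  with D show ?thesis by linarith
qed

lemma rho_ge:
  assumes "0 < n" "k \<in> spectrum (R1 n c U W)"
  shows "cmod k \<le> spectral_radius (R1 n c U W)"
  using spectral_radius_mem_max(2)[OF R1_carrier assms(1)] assms(2) by auto

theorem mainTheorem5:
  fixes n :: nat and r :: real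
  assumes "n \<ge> 2" and "0 < r" and "r < 1"
  shows "is_semigroup n (S_r n r) \<and>
         eps_submultiplicative (4 * r\<^sup>2 / (1 - r\<^sup>2)\<^sup>2) (S_r n r)"
proof -
  obtain m where m: "n = Suc m" using assms(1) by (cases n) auto
  have mm: "n - 1 = m" using m by simp
  have n0: "0 < n" using m by simp
  define eps where "eps = 4 * r\<^sup>2 / (1 - r\<^sup>2)\<^sup>2"
  have eps0: "0 \<le> eps" unfolding eps_def by simp
  have elem: "\<exists>c x y. A = R1 n c (Uf y) (Wf x) \<and> x \<in> carrier_vec m \<and> y \<in> carrier_vec m
      \<and> vnorm x < r \<and> vnorm y < r" if "A \<in> S_r n r" for A
    using that unfolding S_r_def mm blockM_R1 by auto
  have mem: "R1 n c (Uf y) (Wf x) \<in> S_r n r"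
    if "x \<in> carrier_vec m" "y \<in> carrier_vec m" "vnorm x < r" "vnorm y < r" for c x y
    unfolding S_r_def mm blockM_R1[symmetric] using that by blast
  have sg: "is_semigroup n (S_r n r)"
    unfolding is_semigroup_def
  proof (intro conjI ballI subsetI)
    fix A assume "A \<in> S_r n r"
    then show "A \<in> carrier_mat n n" using elem R1_carrier by blast
  next
    fix A B assume A: "A \<in> S_r n r" and B: "B \<in> S_r n r"
    obtain c x y where cA: "A = R1 n c (Uf y) (Wf x)" "x \<in> carrier_vec m" "y \<in> carrier_vec m"
      "vnorm x < r" "vnorm y < r" using elem[OF A] by blast
    obtain c' x' y' where cB: "B = R1 n c' (Uf y') (Wf x')" "x' \<in> carrier_vec m" "y' \<in> carrier_vec m"
      "vnorm x' < r" "vnorm y' < r" using elem[OF B] by blast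
    show "A * B \<in> S_r n r" unfolding cA(1) cB(1) R1_mult by (rule mem) (use cA cB in auto)
  qed
  have es: "eps_submultiplicative eps (S_r n r)"
    unfolding eps_submultiplicative_def
  proof (intro ballI)
    fix A B \<gamma> assume A: "A \<in> S_r n r" and B: "B \<in> S_r n r" and g: "\<gamma> \<in> spectrum (A * B)"
    obtain c x y where cA: "A = R1 n c (Uf y) (Wf x)" "x \<in> carrier_vec m" "y \<in> carrier_vec m"
      "vnorm x < r" "vnorm y < r" using elem[OF A] by blast
    obtain c' x' y' where cB: "B = R1 n c' (Uf y') (Wf x')" "x' \<in> carrier_vec m" "y' \<in> carrier_vec m"
      "vnorm x' < r" "vnorm y' < r" using elem[OF B] by blast
    have AB: "A * B = R1 n (c * c' * T n x y') (Uf y) (Wf x')"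
      unfolding cA(1) cB(1) R1_mult T_def ..
    have lA: "c * T n x y \<in> spectrum A" unfolding cA(1) T_def by (rule R1_spec_t) (use n0 in auto)
    have lB: "c' * T n x' y' \<in> spectrum B" unfolding cB(1) T_def by (rule R1_spec_t) (use n0 in auto)
    have zA: "0 \<in> spectrum A" unfolding cA(1) by (rule R1_spec_0) (use assms in auto)
    have zB: "0 \<in> spectrum B" unfolding cB(1) by (rule R1_spec_0) (use assms in auto)
    have rA: "cmod (c * T n x y) \<le> spectral_radius A" unfolding cA(1) by (rule rho_ge[OF n0]) (use lA cA in simp)
    have rB: "cmod (c' * T n x' y') \<le> spectral_radius B" unfolding cB(1) by (rule rho_ge[OF n0]) (use lB cB in simp)
    have rA0: "0 \<le> spectral_radius A" using rA norm_ge_zero order_trans by blast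
    have rB0: "0 \<le> spectral_radius B" using rB norm_ge_zero order_trans by blast
    from R1_spec_sub[OF g[unfolded AB]]
    have "\<gamma> = 0 \<or> \<gamma> = c * c' * T n x y' * T n x' y" unfolding T_def by simp
    then show "\<exists>\<alpha>\<in>spectrum A. \<exists>\<beta>\<in>spectrum B. cmod (\<gamma> - \<alpha> * \<beta>) \<le> eps * spectral_radius A * spectral_radius B"
    proof
      assume "\<gamma> = 0"
      then show ?thesis using zA zB eps0 rA0 rB0 by (intro bexI[of _ 0]) auto
    next
      assume gd: "\<gamma> = c * c' * T n x y' * T n x' y"
      have "cmod (\<gamma> - (c * T n x y) * (c' * T n x' y'))
          = cmod c * cmod c' * cmod (T n x y' * T n x' y - T n x y * T n x' y')"
        unfolding gd by (simp add: norm_mult[symmetric] algebra_simps)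
      also have "\<dots> \<le> cmod c * cmod c' * (eps * (cmod (T n x y) * cmod (T n x' y')))"
        unfolding m eps_def by (intro mult_left_mono key_ineq) (use cA cB assms in auto)
      also have "\<dots> = eps * cmod (c * T n x y) * cmod (c' * T n x' y')"
        by (simp add: norm_mult)
      also have "\<dots> \<le> eps * spectral_radius A * spectral_radius B"
        using rA rB eps0 rA0 by (intro mult_mono mult_left_mono) auto
      finally show ?thesis using lA lB by blast
    qed
  qed
  show ?thesis using sg es unfolding eps_def by simp
qed

end
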